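(* Let $q,n,d,m$ be positive integers with $q\ge 2$ such that $d=m\bigl(qd-(q-1)(n-1)\bigr)$ and such that $n-d$ does not divide $m(n-1)$. If $r\in\{1,\dots,q-1\}$ satisfies $$n(n-1-d)(r-1)r<(q-r+1)\bigl(qm(q+r-2)-2r\bigr),$$ then $A_q(n,d)<q^2m-r$.
   Context: For an integer $q\ge2$ let $[q]=\{0,1,\dots,q-1\}$. For words $u,v\in[q]^n$, the Hamming distance $d_H(u,v)$ is the number of coordinates $i$ with $u_i\neq v_i$. The minimum distance $d_{\min}(C)$ of a code $C\subseteq[q]^n$ is the minimum of $d_H(u,v)$ over distinct $u,v\in C$ (and $\infty$ if $|C|\le1$). $A_q(n,d)$ denotes the maximum cardinality of a code $C\subseteq[q]^n$ with $d_{\min}(C)\ge d$. *)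

theory Defs
  imports Main "HOL-Library.FuncSet"
begin

definition words :: "nat \<Rightarrow> nat \<Rightarrow> (nat \<Rightarrow> nat) set" where
  "words q n = PiE {..<n} (\<lambda>_. {..<q})"

definition hamming :: "nat \<Rightarrow> (nat \<Rightarrow> nat) \<Rightarrow> (nat \<Rightarrow> nat) \<Rightarrow> nat" where
  "hamming n u v = card {i \<in> {..<n}. u i \<noteq> v i}"

text \<open>C has minimum distance at least d (vacuous if |C| \<le> 1, matching d_min = \<infinity>).\<close>
definition min_dist_ge :: "nat \<Rightarrow> (nat \<Rightarrow> nat) set \<Rightarrow> nat \<Rightarrow> bool" where
  "min_dist_ge n C d \<longleftrightarrow> (\<forall>u\<in>C. \<forall>v\<in>C. u \<noteq> v \<longrightarrow> d \<le> hamming n u v)"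

definition A_q :: "nat \<Rightarrow> nat \<Rightarrow> nat \<Rightarrow> nat" where
  "A_q q n d = Max {card C | C. C \<subseteq> words q n \<and> min_dist_ge n C d}"

end

theory Submission
  imports Defs
begin

definition agr :: "nat \<Rightarrow> (nat\<Rightarrow>nat) \<Rightarrow> (nat\<Rightarrow>nat) \<Rightarrow> nat" where
  "agr n u v = card {i\<in>{..<n}. u i = v i}"

lemma card_filter_sum: "finite A \<Longrightarrow> int (card {x\<in>A. P x}) = (\<Sum>x\<in>A. if P x then 1 else 0)"
  by (simp add: sum.inter_filter[symmetric])

lemma agr_sum: "int (agr n u v) = (\<Sum>i<n. if u i = v i then 1 else 0)"
  unfolding agr_def by (rule card_filter_sum) simp

lemma ham_agr: "int (hamming n u v) = int n - int (agr n u v)"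
proof -
  have "int (hamming n u v) = (\<Sum>i<n. if u i \<noteq> v i then 1 else 0)"
    unfolding hamming_def by (rule card_filter_sum) simp
  moreover have "(\<Sum>i<n. (if u i \<noteq> v i then 1 else 0::int)) + (\<Sum>i<n. if u i = v i then 1 else 0) = int n"
  proof -
    have e: "\<And>x. (if u x \<noteq> v x then 1 else 0::int) + (if u x = v x then 1 else 0) = 1" by auto
    show ?thesis by (simp only: sum.distrib[symmetric] e) simp
  qed
  ultimately show ?thesis using agr_sum[of n u v] by linarith
qed

lemma sum_key:
  assumes "finite C" "finite K" "\<And>u. u\<in>C \<Longrightarrow> key u \<in> K"
  shows "(\<Sum>k\<in>K. int (card {u\<in>C. key u = k})) = int (card C)"
proof -
  have "(\<Sum>k\<in>K. (\<Sum>u\<in>{u\<in>C. key u = k}. 1::int)) = (\<Sum>u\<in>C. 1)"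
    using sum.group[of C K key "\<lambda>_. 1::int"] assms by auto
  then show ?thesis by simp
qed

lemma pair_key:
  assumes "finite C" "finite K" "\<And>u. u\<in>C \<Longrightarrow> key u \<in> K"
  shows "(\<Sum>u\<in>C. \<Sum>v\<in>C. (if key u = key v then 1 else 0::int)) = (\<Sum>k\<in>K. (int (card {u\<in>C. key u = k}))^2)"
proof -
  define c where "c k = int (card {u\<in>C. key u = k})" for k
  have "(\<Sum>v\<in>C. (if key u = key v then 1 else 0::int)) = c (key u)" for u
    unfolding c_def using card_filter_sum[OF assms(1), of "\<lambda>v. key v = key u"]
    by (simp add: eq_commute)
  then have "(\<Sum>u\<in>C. \<Sum>v\<in>C. (if key u = key v then 1 else 0::int)) = (\<Sum>u\<in>C. c (key u))" by simp
  also have "\<dots> = (\<Sum>k\<in>K. (\<Sum>u\<in>{u\<in>C. key u = k}. c (key u)))"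
    by (rule sum.group[OF assms(1,2), symmetric]) (use assms(3) in auto)
  also have "\<dots> = (\<Sum>k\<in>K. (\<Sum>u\<in>{u\<in>C. key u = k}. c k))"
    by (intro sum.cong refl) auto
  also have "\<dots> = (\<Sum>k\<in>K. c k ^ 2)" by (simp add: c_def power2_eq_square del: of_nat_sum)
  finally show ?thesis unfolding c_def .
qed

definition S :: "(nat\<Rightarrow>nat) set \<Rightarrow> nat \<Rightarrow> nat \<Rightarrow> int" where
  "S C i j = (\<Sum>u\<in>C. \<Sum>v\<in>C. (if u i = v i \<and> u j = v j then 1 else 0))"

lemma sum_agr: "(\<Sum>u\<in>C. \<Sum>v\<in>C. int (agr n u v)) = (\<Sum>i<n. S C i i)"
proof -
  have "(\<Sum>u\<in>C. \<Sum>v\<in>C. int (agr n u v)) = (\<Sum>u\<in>C. \<Sum>v\<in>C. \<Sum>i<n. (if u i = v i then 1 else 0::int))"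
    by (simp only: agr_sum)
  also have "\<dots> = (\<Sum>u\<in>C. \<Sum>i<n. \<Sum>v\<in>C. (if u i = v i then 1 else 0::int))"
    by (rule sum.cong[OF refl], rule sum.swap)
  also have "\<dots> = (\<Sum>i<n. \<Sum>u\<in>C. \<Sum>v\<in>C. (if u i = v i then 1 else 0::int))"
    by (rule sum.swap)
  finally show ?thesis by (simp add: S_def)
qed

lemma sum_agr2: "(\<Sum>u\<in>C. \<Sum>v\<in>C. int (agr n u v)^2) = (\<Sum>i<n. \<Sum>j<n. S C i j)"
proof -
  have "int (agr n u v)^2 = (\<Sum>i<n. \<Sum>j<n. (if u i = v i \<and> u j = v j then 1 else 0::int))" for u v
  proof -
    have "int (agr n u v)^2 = (\<Sum>i<n. \<Sum>j<n. (if u i = v i then 1 else 0::int) * (if u j = v j then 1 else 0))"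
      by (simp only: agr_sum power2_eq_square sum_product)
    also have "\<dots> = (\<Sum>i<n. \<Sum>j<n. (if u i = v i \<and> u j = v j then 1 else 0::int))"
      by (intro sum.cong refl) auto
    finally show ?thesis .
  qed
  then have "(\<Sum>u\<in>C. \<Sum>v\<in>C. int (agr n u v)^2) = (\<Sum>u\<in>C. \<Sum>v\<in>C. \<Sum>i<n. \<Sum>j<n. (if u i = v i \<and> u j = v j then 1 else 0::int))"
    by simp
  also have "\<dots> = (\<Sum>u\<in>C. \<Sum>i<n. \<Sum>v\<in>C. \<Sum>j<n. (if u i = v i \<and> u j = v j then 1 else 0::int))"
    by (rule sum.cong[OF refl], rule sum.swap)
  also have "\<dots> = (\<Sum>i<n. \<Sum>u\<in>C. \<Sum>v\<in>C. \<Sum>j<n. (if u i = v i \<and> u j = v j then 1 else 0::int))"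
    by (rule sum.swap)
  also have "\<dots> = (\<Sum>i<n. \<Sum>u\<in>C. \<Sum>j<n. \<Sum>v\<in>C. (if u i = v i \<and> u j = v j then 1 else 0::int))"
    by (rule sum.cong[OF refl], rule sum.cong[OF refl], rule sum.swap)
  also have "\<dots> = (\<Sum>i<n. \<Sum>j<n. \<Sum>u\<in>C. \<Sum>v\<in>C. (if u i = v i \<and> u j = v j then 1 else 0::int))"
    by (rule sum.cong[OF refl], rule sum.swap)
  finally show ?thesis by (simp add: S_def)
qed

lemma words_lt: "u \<in> words q n \<Longrightarrow> i < n \<Longrightarrow> u i < q"
  unfolding words_def by auto

lemma finite_words: "finite (words q n)"
  unfolding words_def by (rule finite_PiE) auto

lemma S_key2:
  assumes "C \<subseteq> words q n" "i < n" "j < n"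
  shows "S C i j = (\<Sum>k\<in>{..<q}\<times>{..<q}. (int (card {u\<in>C. (u i, u j) = k}))^2)"
proof -
  have "finite C" using assms(1) finite_words finite_subset by blast
  have "S C i j = (\<Sum>u\<in>C. \<Sum>v\<in>C. (if (u i, u j) = (v i, v j) then 1 else 0))"
    by (simp add: S_def)
  also have "\<dots> = (\<Sum>k\<in>{..<q}\<times>{..<q}. (int (card {u\<in>C. (u i, u j) = k}))^2)"
    by (rule pair_key[OF \<open>finite C\<close>]) (use assms words_lt in auto)
  finally show ?thesis .
qed

lemma S_key1:
  assumes "C \<subseteq> words q n" "i < n"
  shows "S C i i = (\<Sum>a<q. (int (card {u\<in>C. u i = a}))^2)"
proof -
  have "finite C" using assms(1) finite_words finite_subset by blast
  have "S C i i = (\<Sum>u\<in>C. \<Sum>v\<in>C. (if u i = v i then 1 else 0))"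
    by (simp add: S_def)
  also have "\<dots> = (\<Sum>a<q. (int (card {u\<in>C. u i = a}))^2)"
    by (rule pair_key[OF \<open>finite C\<close>]) (use assms words_lt in auto)
  finally show ?thesis .
qed

lemma sq_lower:
  fixes c :: "'k \<Rightarrow> int" and m :: int
  assumes "finite K"
  shows "(\<Sum>k\<in>K. c k ^ 2) \<ge> (2*m-1) * (\<Sum>k\<in>K. c k) - int (card K) * (m*(m-1))"
proof -
  have "c k ^ 2 \<ge> (2*m-1) * c k - m*(m-1)" for k
  proof -
    have "(c k - m) * (c k - m + 1) \<ge> 0"
      by (cases "c k \<ge> m") (auto intro: mult_nonneg_nonneg mult_nonpos_nonpos)
    then show ?thesis by (simp add: algebra_simps power2_eq_square)
  qed
  then have "(\<Sum>k\<in>K. c k ^ 2) \<ge> (\<Sum>k\<in>K. (2*m-1) * c k - m*(m-1))"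
    by (intro sum_mono) auto
  then show ?thesis by (simp add: sum_subtractf sum_distrib_left)
qed

lemma cauchy_id:
  fixes c :: "'k \<Rightarrow> int"
  assumes "finite A" "card A = q" "(\<Sum>a\<in>A. c a) = N"
  shows "(\<Sum>a\<in>A. (int q * c a - N)^2) = int q * (int q * (\<Sum>a\<in>A. c a ^ 2) - N^2)"
proof -
  have "(\<Sum>a\<in>A. (int q * c a - N)^2) = (\<Sum>a\<in>A. int q^2 * c a^2 - 2 * int q * N * c a + N^2)"
    by (intro sum.cong refl) (simp add: power2_eq_square algebra_simps)
  also have "\<dots> = int q^2 * (\<Sum>a\<in>A. c a^2) - 2 * int q * N * N + int q * N^2"
    using assms by (simp add: sum.distrib sum_subtractf sum_distrib_left[symmetric])
  finally show ?thesis by (simp add: power2_eq_square algebra_simps)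
qed

lemma code_finite: "C \<subseteq> words q n \<Longrightarrow> finite C"
  using finite_words finite_subset by blast

lemma ham_self: "hamming n u u = 0" by (simp add: hamming_def)

lemma sum_ham_lower:
  assumes "finite D" "min_dist_ge n D d"
  shows "(\<Sum>u\<in>D. \<Sum>v\<in>D. int (hamming n u v)) \<ge> int (card D) * (int (card D) - 1) * int d"
proof -
  have "(\<Sum>v\<in>D. int (hamming n u v)) \<ge> (int (card D) - 1) * int d" if "u \<in> D" for u
  proof -
    have "(\<Sum>v\<in>D. int (hamming n u v)) = (\<Sum>v\<in>D-{u}. int (hamming n u v))"
      using sum.remove[OF assms(1) that, of "\<lambda>v. int (hamming n u v)"] by (simp add: ham_self)
    also have "\<dots> \<ge> (\<Sum>v\<in>D-{u}. int d)"
      using assms(2) that unfolding min_dist_ge_def by (intro sum_mono) auto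
    finally have "(\<Sum>v\<in>D. int (hamming n u v)) \<ge> int (card (D - {u})) * int d" by simp
    moreover have "int (card (D - {u})) = int (card D) - 1"
      using that assms(1) card_gt_0_iff[of D] by (auto simp: card_Diff_singleton of_nat_diff)
    ultimately show ?thesis by simp
  qed
  then have "(\<Sum>u\<in>D. \<Sum>v\<in>D. int (hamming n u v)) \<ge> (\<Sum>u\<in>D. (int (card D) - 1) * int d)"
    by (intro sum_mono) auto
  then show ?thesis by (simp add: algebra_simps)
qed

lemma sum_ham_eq:
  assumes "finite D"
  shows "(\<Sum>u\<in>D. \<Sum>v\<in>D. int (hamming n u v)) = int n * int (card D)^2 - (\<Sum>j<n. S D j j)"
proof -
  have "(\<Sum>u\<in>D. \<Sum>v\<in>D. int (hamming n u v)) = (\<Sum>u\<in>D. \<Sum>v\<in>D. int n - int (agr n u v))"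
    by (simp add: ham_agr)
  also have "\<dots> = (\<Sum>u\<in>D. int n * int (card D) - (\<Sum>v\<in>D. int (agr n u v)))"
    by (simp add: sum_subtractf)
  also have "\<dots> = int n * int (card D)^2 - (\<Sum>u\<in>D. \<Sum>v\<in>D. int (agr n u v))"
    by (simp add: sum_subtractf power2_eq_square algebra_simps)
  finally show ?thesis by (simp add: sum_agr)
qed

lemma cauchy_S:
  assumes "D \<subseteq> words q n" "j < n"
  shows "(\<Sum>b<q. (int q * int (card {u\<in>D. u j = b}) - int (card D))^2) = int q * (int q * S D j j - int (card D)^2)"
proof -
  have fD: "finite D" using code_finite[OF assms(1)] .
  have "(\<Sum>b<q. int (card {u\<in>D. u j = b})) = int (card D)"
    by (rule sum_key[OF fD]) (use assms words_lt in auto)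
  from cauchy_id[of "{..<q}" q "\<lambda>b. int (card {u\<in>D. u j = b})", OF _ _ this]
  show ?thesis using S_key1[OF assms] by simp
qed

lemma plotkin:
  fixes q n d m :: nat
  assumes C: "C \<subseteq> words q n" "min_dist_ge n C d"
    and i: "i < n"
    and rel: "int d = int m * (int q * int d - (int q - 1) * (int n - 1))"
    and pos: "q \<ge> 2" "d > 0" "m > 0"
  shows "card {u\<in>C. u i = a} \<le> q * m"
    and "card {u\<in>C. u i = a} = q*m \<Longrightarrow> j < n \<Longrightarrow> j \<noteq> i \<Longrightarrow> b < q \<Longrightarrow> card {u\<in>C. u i = a \<and> u j = b} = m"
proof -
  define D where "D = {u\<in>C. u i = a}"
  define N where "N = int (card D)"
  have Dw: "D \<subseteq> words q n" using C unfolding D_def by auto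
  have fD: "finite D" using code_finite[OF Dw] .
  have Dmd: "min_dist_ge n D d" using C(2) unfolding D_def min_dist_ge_def by auto
  define G where "G j = int q * S D j j - N^2" for j
  have G0: "G j \<ge> 0" if "j < n" for j
  proof -
    have "0 \<le> (\<Sum>b<q. (int q * int (card {u\<in>D. u j = b}) - int (card D))^2)"
      by (intro sum_nonneg) auto
    then have "0 \<le> int q * G j" using cauchy_S[OF Dw that] by (simp add: G_def N_def)
    then show ?thesis using pos by (simp add: zero_le_mult_iff)
  qed
  have Sii: "S D i i = N^2"
    unfolding S_def N_def D_def by (simp add: power2_eq_square)
  define J where "J = {..<n} - {i}"
  have cardJ: "int (card J) = int n - 1" using i unfolding J_def by (simp add: of_nat_diff)
  have "(\<Sum>j<n. S D j j) = S D i i + (\<Sum>j\<in>J. S D j j)"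
    unfolding J_def using i by (simp add: sum.remove)
  have qsum: "int q * (\<Sum>j<n. S D j j) = int q * N^2 + (\<Sum>j\<in>J. G j + N^2)"
  proof -
    have "(\<Sum>j<n. S D j j) = S D i i + (\<Sum>j\<in>J. S D j j)"
      unfolding J_def using i by (simp add: sum.remove)
    moreover have "(\<Sum>j\<in>J. G j + N^2) = int q * (\<Sum>j\<in>J. S D j j)"
      by (simp add: G_def sum_distrib_left)
    ultimately show ?thesis using Sii by (simp add: algebra_simps)
  qed
  have H1: "int q * N * (N - 1) * int d \<le> int q * (int n * N^2 - (\<Sum>j<n. S D j j))"
    using sum_ham_lower[OF fD Dmd] sum_ham_eq[OF fD, of n] pos unfolding N_def
    by (simp add: mult_left_mono mult.assoc)
  have sumG: "(\<Sum>j\<in>J. G j + N^2) = (\<Sum>j\<in>J. G j) + (int n - 1) * N^2"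
    using cardJ by (simp add: sum.distrib)
  have key: "int q * N * (N - 1) * int d + (\<Sum>j\<in>J. G j) \<le> (int n - 1) * (int q - 1) * N^2"
    using H1 qsum sumG by (simp add: algebra_simps)
  have G0J: "(\<Sum>j\<in>J. G j) \<ge> 0" using G0 unfolding J_def by (intro sum_nonneg) auto
  have N0: "N \<ge> 0" unfolding N_def by simp
  have X: "int q * int d - (int q - 1) * (int n - 1) > 0"
    using rel pos by (metis mult_zero_right of_nat_0_less_iff of_nat_less_0_iff zero_less_mult_iff
        linorder_neqE_linordered_idom)
  show le: "card {u\<in>C. u i = a} \<le> q * m"
  proof -
    have k2: "int q * N * (N - 1) * int d \<le> (int n - 1) * (int q - 1) * N^2" using key G0J by linarith
    have "N \<le> int q * int m"
    proof (cases "N = 0")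
      case True then show ?thesis by simp
    next
      case False
      then have Np: "N > 0" using N0 by simp
      have "N * (int q * (N - 1) * int d) \<le> N * ((int n - 1) * (int q - 1) * N)"
        using k2 by (simp add: power2_eq_square algebra_simps)
      then have k3: "int q * (N - 1) * int d \<le> (int n - 1) * (int q - 1) * N"
        using Np by simp
      then have "N * (int q * int d - (int q - 1) * (int n - 1)) \<le> int q * int d"
        by (simp add: algebra_simps)
      then have "int m * (N * (int q * int d - (int q - 1) * (int n - 1))) \<le> int m * (int q * int d)"
        by (simp add: mult_left_mono)
      moreover have "int m * (N * (int q * int d - (int q - 1) * (int n - 1))) = N * int d"
      proof -
        have "int m * (N * (int q * int d - (int q - 1) * (int n - 1))) = N * (int m * (int q * int d - (int q - 1) * (int n - 1)))"
          by (simp add: algebra_simps)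
        also have "\<dots> = N * int d" by (metis rel)
        finally show ?thesis .
      qed
      ultimately have "N * int d \<le> int q * int m * int d" by (simp add: algebra_simps)
      then show ?thesis using pos by simp
    qed
    then have "int (card {u\<in>C. u i = a}) \<le> int (q * m)" unfolding N_def D_def by simp
    then show ?thesis by (simp only: of_nat_le_iff)
  qed
  assume full: "card {u\<in>C. u i = a} = q*m" and j: "j < n" "j \<noteq> i" and b: "b < q"
  have NN: "N = int q * int m" using full unfolding N_def D_def by simp
  have rel2: "(int q * int m - 1) * int d = int m * (int q - 1) * (int n - 1)"
    using rel by (simp add: algebra_simps)
  have "int q * N * (N - 1) * int d = (int n - 1) * (int q - 1) * N^2"
  proof -
    have "int q * N * (N - 1) * int d = int q * N * ((int q * int m - 1) * int d)"
      using NN by (simp add: algebra_simps)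
    also have "\<dots> = int q * N * (int m * (int q - 1) * (int n - 1))" using rel2 by simp
    finally show ?thesis using NN by (simp add: power2_eq_square algebra_simps)
  qed
  then have "(\<Sum>j\<in>J. G j) \<le> 0" using key by linarith
  then have "(\<Sum>j\<in>J. G j) = 0" using G0J by linarith
  then have "\<forall>j\<in>J. G j = 0"
    using sum_nonneg_eq_0_iff[of J G] G0 unfolding J_def by auto
  then have Gj: "G j = 0" using j unfolding J_def by auto
  have "(\<Sum>b<q. (int q * int (card {u\<in>D. u j = b}) - int (card D))^2) = 0"
    using cauchy_S[OF Dw j(1)] Gj by (simp add: G_def N_def)
  then have "\<forall>b\<in>{..<q}. (int q * int (card {u\<in>D. u j = b}) - int (card D))^2 = 0"
    by (subst sum_nonneg_eq_0_iff[symmetric]) auto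
  then have "int q * int (card {u\<in>D. u j = b}) = int q * int m"
    using b NN unfolding N_def by auto
  then have "card {u\<in>D. u j = b} = m" using pos by simp
  moreover have "{u\<in>D. u j = b} = {u\<in>C. u i = a \<and> u j = b}" unfolding D_def by auto
  ultimately show "card {u\<in>C. u i = a \<and> u j = b} = m" by simp
qed

lemma agr_sym: "agr n u v = agr n v u"
  unfolding agr_def by (simp add: eq_commute)

lemma agr_self: "agr n u u = n"
  unfolding agr_def by simp

locale codeloc =
  fixes q n d m r :: nat and C :: "(nat\<Rightarrow>nat) set"
  assumes q2: "q \<ge> 2" and npos: "n > 0" and dpos: "d > 0" and mpos: "m > 0"
  and rel: "int d = int m * (int q * int d - (int q - 1) * (int n - 1))"
  and ndvd: "\<not> ((int n - int d) dvd (int m * (int n - 1)))"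
  and r1: "1 \<le> r" and rq: "r \<le> q - 1"
  and Cw: "C \<subseteq> words q n" and Cd: "min_dist_ge n C d"
  and Ccard: "int (card C) = int q^2 * int m - int r"
begin

definition t :: int where "t = int n - int d"
definition M :: int where "M = int (card C)"
definition f :: "nat \<Rightarrow> nat \<Rightarrow> int" where "f i a = int (card {u\<in>C. u i = a})"
definition e :: "nat \<Rightarrow> nat \<Rightarrow> int" where "e i a = int q * int m - f i a"
definition E :: "nat \<Rightarrow> int" where "E i = (\<Sum>a<q. e i a ^ 2)"
definition bad :: "(nat\<Rightarrow>nat) \<Rightarrow> (nat\<Rightarrow>nat) \<Rightarrow> bool" where
  "bad u v \<longleftrightarrow> u \<noteq> v \<and> 0 < int (agr n u v) \<and> int (agr n u v) < t"
definition L :: int where "L = (2*int m - 1) * M - int q^2 * (int m * (int m - 1))"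

lemma fC: "finite C" using code_finite[OF Cw] .

lemma rel2: "(int q * int m - 1) * int d = int m * (int q - 1) * (int n - 1)"
  using rel by (simp add: algebra_simps)

lemma d_lt_n: "d < n"
proof (rule ccontr)
  assume "\<not> d < n"
  then have h: "int d \<ge> int n" by simp
  have X: "int q * int d - (int q - 1) * (int n - 1) \<ge> int d + 1"
  proof -
    have "(int q - 1) * (int d - int n + 1) \<ge> 1 * 1" using h q2
      by (intro mult_mono) auto
    then show ?thesis by (simp add: algebra_simps)
  qed
  have "int m * (int q * int d - (int q - 1) * (int n - 1)) \<ge> 1 * (int d + 1)"
    using X mpos by (intro mult_mono) auto
  then show False using rel by simp
qed

lemma t2: "t \<ge> 2"
proof -
  have "t \<ge> 1" using d_lt_n unfolding t_def by simp
  moreover have "t \<noteq> 1" using ndvd unfolding t_def by auto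
  ultimately show ?thesis by simp
qed

lemma agr_le_t: "u \<in> C \<Longrightarrow> v \<in> C \<Longrightarrow> u \<noteq> v \<Longrightarrow> int (agr n u v) \<le> t"
  using Cd ham_agr[of n u v] unfolding min_dist_ge_def t_def by force

lemma bad_sym: "bad u v \<Longrightarrow> bad v u"
  unfolding bad_def using agr_sym by metis

lemma f_le: "i < n \<Longrightarrow> f i a \<le> int q * int m"
  using plotkin(1)[OF Cw Cd _ rel q2 dpos mpos, of i a] unfolding f_def
  by (metis of_nat_le_iff of_nat_mult)

lemma e_nonneg: "i < n \<Longrightarrow> e i a \<ge> 0"
  using f_le unfolding e_def by simp

lemma f_sum: "i < n \<Longrightarrow> (\<Sum>a<q. f i a) = M"
  unfolding f_def M_def by (rule sum_key[OF fC]) (use Cw words_lt in auto)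

lemma e_sum: "i < n \<Longrightarrow> (\<Sum>a<q. e i a) = int r"
proof -
  assume i: "i < n"
  have "(\<Sum>a<q. e i a) = int q * (int q * int m) - M"
    unfolding e_def using f_sum[OF i] by (simp add: sum_subtractf)
  then show ?thesis using Ccard unfolding M_def by (simp add: power2_eq_square algebra_simps)
qed

lemma e_le_r: "i < n \<Longrightarrow> a < q \<Longrightarrow> e i a \<le> int r"
proof -
  assume i: "i < n" and a: "a < q"
  have "e i a \<le> (\<Sum>b<q. e i b)"
    using a e_nonneg[OF i] by (intro member_le_sum) auto
  then show ?thesis using e_sum[OF i] by simp
qed

lemma E_ge: "i < n \<Longrightarrow> E i \<ge> int r"
proof -
  assume i: "i < n"
  have "e i a ^ 2 \<ge> e i a" if "a < q" for a
  proof -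
    have "e i a * (e i a - 1) \<ge> 0"
      using e_nonneg[OF i, of a] by (cases "e i a = 0") (auto intro: mult_nonneg_nonneg)
    then show ?thesis by (simp add: power2_eq_square algebra_simps)
  qed
  then have "E i \<ge> (\<Sum>a<q. e i a)" unfolding E_def by (intro sum_mono) auto
  then show ?thesis using e_sum[OF i] by simp
qed

lemma E_le: "i < n \<Longrightarrow> E i \<le> int r ^ 2"
proof -
  assume i: "i < n"
  have "e i a ^ 2 \<le> int r * e i a" if "a < q" for a
    using e_le_r[OF i that] e_nonneg[OF i, of a] by (simp add: power2_eq_square mult_right_mono)
  then have "E i \<le> (\<Sum>a<q. int r * e i a)" unfolding E_def by (intro sum_mono) auto
  then show ?thesis using e_sum[OF i] by (simp add: sum_distrib_left[symmetric] power2_eq_square)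
qed

lemma Sii: "i < n \<Longrightarrow> S C i i = int q^3 * int m^2 - 2 * int q * int m * int r + E i"
proof -
  assume i: "i < n"
  have "S C i i = (\<Sum>a<q. f i a ^ 2)" using S_key1[OF Cw i] unfolding f_def by simp
  also have "\<dots> = (\<Sum>a<q. (int q * int m)^2 - 2 * (int q * int m) * e i a + e i a ^ 2)"
    unfolding e_def by (intro sum.cong refl) (simp add: power2_eq_square algebra_simps)
  also have "\<dots> = int q * (int q * int m)^2 - 2 * (int q * int m) * int r + E i"
    unfolding E_def using e_sum[OF i] by (simp add: sum.distrib sum_subtractf sum_distrib_left[symmetric])
  finally show ?thesis by (simp add: power2_eq_square power3_eq_cube algebra_simps)
qed

lemma Sij: "i < n \<Longrightarrow> j < n \<Longrightarrow> S C i j \<ge> L"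
proof -
  assume i: "i < n" and j: "j < n"
  let ?K = "{..<q}\<times>{..<q}"
  have fK: "finite ?K" by simp
  have s: "(\<Sum>k\<in>?K. int (card {u\<in>C. (u i, u j) = k})) = M"
    unfolding M_def by (rule sum_key[OF fC fK]) (use Cw words_lt i j in auto)
  have "S C i j = (\<Sum>k\<in>?K. (int (card {u\<in>C. (u i, u j) = k}))^2)" using S_key2[OF Cw i j] .
  also have "\<dots> \<ge> (2*int m-1) * M - int (card ?K) * (int m*(int m-1))"
    using sq_lower[OF fK, where c="\<lambda>k. int (card {u\<in>C. (u i, u j) = k})" and m="int m"] s by simp
  finally show ?thesis unfolding L_def by (simp add: card_cartesian_product power2_eq_square)
qed

definition Bad :: "((nat\<Rightarrow>nat) \<times> (nat\<Rightarrow>nat)) set" where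
  "Bad = {p\<in>C\<times>C. bad (fst p) (snd p)}"

definition T :: int where
  "T = (\<Sum>u\<in>C. \<Sum>v\<in>C. int (agr n u v) * (t - int (agr n u v)))"

lemma T_eq: "T = t * (\<Sum>i<n. S C i i) - (\<Sum>i<n. \<Sum>j<n. S C i j)"
proof -
  have "T = (\<Sum>u\<in>C. \<Sum>v\<in>C. t * int (agr n u v) - int (agr n u v)^2)"
    unfolding T_def by (intro sum.cong refl) (simp add: power2_eq_square algebra_simps)
  also have "\<dots> = t * (\<Sum>u\<in>C. \<Sum>v\<in>C. int (agr n u v)) - (\<Sum>u\<in>C. \<Sum>v\<in>C. int (agr n u v)^2)"
    by (simp add: sum_subtractf sum_distrib_left)
  finally show ?thesis by (simp add: sum_agr sum_agr2)
qed

lemma Sdouble: "(\<Sum>i<n. \<Sum>j<n. S C i j) \<ge> (\<Sum>i<n. S C i i) + int n * (int n - 1) * L"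
proof -
  have "(\<Sum>j<n. S C i j) \<ge> S C i i + (int n - 1) * L" if i: "i < n" for i
  proof -
    have "(\<Sum>j<n. S C i j) = S C i i + (\<Sum>j\<in>{..<n}-{i}. S C i j)"
      using i by (simp add: sum.remove)
    moreover have "(\<Sum>j\<in>{..<n}-{i}. S C i j) \<ge> (\<Sum>j\<in>{..<n}-{i}. L)"
      using Sij[OF i] by (intro sum_mono) auto
    moreover have "(\<Sum>j\<in>{..<n}-{i}. L) = (int n - 1) * L"
      using i by (simp add: of_nat_diff)
    ultimately show ?thesis by linarith
  qed
  then have "(\<Sum>i<n. \<Sum>j<n. S C i j) \<ge> (\<Sum>i<n. S C i i + (int n - 1) * L)"
    by (intro sum_mono) auto
  moreover have "(\<Sum>i<n. S C i i + (int n - 1) * L) = (\<Sum>i<n. S C i i) + int n * (int n - 1) * L"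
    by (simp add: sum.distrib)
  ultimately show ?thesis by linarith
qed

lemma card_Bad_sum: "int (card Bad) = (\<Sum>u\<in>C. \<Sum>v\<in>C. if bad u v then 1 else 0)"
proof -
  have "int (card Bad) = (\<Sum>p\<in>C\<times>C. if bad (fst p) (snd p) then 1 else 0)"
    unfolding Bad_def by (rule card_filter_sum) (simp add: fC)
  also have "\<dots> = (\<Sum>u\<in>C. \<Sum>v\<in>C. if bad u v then 1 else 0)"
    by (simp add: sum.cartesian_product split_def)
  finally show ?thesis .
qed

lemma T_lower: "(t - 1) * int (card Bad) + M * int n * (t - int n) \<le> T"
proof -
  have pt: "int (agr n u v) * (t - int (agr n u v)) \<ge>
      (t - 1) * (if bad u v then 1 else 0) + (if u = v then int n * (t - int n) else 0)"
    if u: "u \<in> C" and v: "v \<in> C" for u v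
  proof (cases "u = v")
    case True
    then show ?thesis by (simp add: agr_self bad_def)
  next
    case False
    define a where "a = int (agr n u v)"
    have a0: "a \<ge> 0" and at: "a \<le> t" using agr_le_t[OF u v False] unfolding a_def by auto
    show ?thesis
    proof (cases "bad u v")
      case True
      then have "1 \<le> a" "a \<le> t - 1" unfolding bad_def a_def by auto
      then have "(a - 1) * (t - 1 - a) \<ge> 0" by simp
      then show ?thesis using True False unfolding a_def[symmetric] by (simp add: algebra_simps)
    next
      case nb: False
      then have "a = 0 \<or> a = t" using False a0 at unfolding bad_def a_def by auto
      then show ?thesis using nb False unfolding a_def[symmetric] by auto
    qed
  qed
  have "T \<ge> (\<Sum>u\<in>C. \<Sum>v\<in>C. (t - 1) * (if bad u v then 1 else 0) + (if u = v then int n * (t - int n) else 0))"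
    unfolding T_def using pt by (intro sum_mono) auto
  also have "(\<Sum>u\<in>C. \<Sum>v\<in>C. (t - 1) * (if bad u v then 1 else 0) + (if u = v then int n * (t - int n) else 0))
      = (t - 1) * (\<Sum>u\<in>C. \<Sum>v\<in>C. (if bad u v then 1 else 0)) + (\<Sum>u\<in>C. int n * (t - int n))"
    using fC by (simp add: sum.distrib sum_distrib_left)
  finally show ?thesis using card_Bad_sum unfolding M_def by (simp add: algebra_simps)
qed

lemma identity:
  "(t - 1) * int n * (int q^3 * int m^2 - 2 * int q * int m * int r + int r) - int n * (int n - 1) * L
     - M * int n * (t - int n) = 0"
proof -
  define Y where "Y = int q^3 * int m^2 - 2 * int q * int m * int r + int r"
  define X where "X = (t - 1) * int n * Y - int n * (int n - 1) * L - M * int n * (t - int n)"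
  have X1: "X = int n * (int n - 1) * (Y - L) + int d * (int n * (M - Y))"
    unfolding X_def t_def by (simp add: algebra_simps)
  have "(int q * int m - 1) * X = int n * (int n - 1) * ((int q * int m - 1) * (Y - L))
      + int n * (M - Y) * ((int q * int m - 1) * int d)"
    unfolding X1 by (simp add: algebra_simps)
  also have "\<dots> = int n * (int n - 1) * ((int q * int m - 1) * (Y - L) + int m * (int q - 1) * (M - Y))"
    unfolding rel2 by (simp add: algebra_simps)
  also have "(int q * int m - 1) * (Y - L) + int m * (int q - 1) * (M - Y) = 0"
    unfolding Y_def L_def M_def Ccard by (simp add: algebra_simps power2_eq_square power3_eq_cube)
  finally have "(int q * int m - 1) * X = 0" by simp
  moreover have "int q * int m - 1 > 0"
  proof -
    have "int q * int m \<ge> 2 * 1" using q2 mpos by (intro mult_mono) auto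
    then show ?thesis by simp
  qed
  ultimately have "X = 0" by simp
  then show ?thesis unfolding X_def Y_def .
qed

lemma Bad_upper: "int (card Bad) \<le> (\<Sum>i<n. E i - int r)"
proof -
  have sS: "(\<Sum>i<n. S C i i) = int n * (int q^3 * int m^2 - 2 * int q * int m * int r) + (\<Sum>i<n. E i)"
    by (simp add: Sii sum.distrib)
  have "(t - 1) * int (card Bad) + M * int n * (t - int n) \<le> (t - 1) * (\<Sum>i<n. S C i i) - int n * (int n - 1) * L"
    using T_lower T_eq Sdouble by (simp add: algebra_simps)
  then have "(t - 1) * int (card Bad) \<le> (t - 1) * (\<Sum>i<n. E i - int r)"
    using identity sS by (simp add: sum_subtractf algebra_simps)
  then show ?thesis using t2 by simp
qed

lemma exists_bad:
  assumes i: "i < n" and full: "f i a = int q * int m" and u: "u \<in> C" and ua: "u i \<noteq> a"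
  shows "\<exists>v\<in>C. v i = a \<and> bad u v"
proof (rule ccontr)
  assume nb: "\<not> (\<exists>v\<in>C. v i = a \<and> bad u v)"
  define D where "D = {v\<in>C. v i = a}"
  have fD: "finite D" unfolding D_def using fC by simp
  have fullN: "card {v\<in>C. v i = a} = q * m" using full unfolding f_def
    by (metis of_nat_eq_iff of_nat_mult)
  have "(\<Sum>v\<in>D. int (agr n u v)) = (\<Sum>v\<in>D. \<Sum>j<n. if u j = v j then 1 else 0)"
    by (simp add: agr_sum)
  also have "\<dots> = (\<Sum>j<n. \<Sum>v\<in>D. if u j = v j then 1 else 0)" by (rule sum.swap)
  also have "\<dots> = (\<Sum>j<n. int (card {v\<in>D. u j = v j}))"
    using card_filter_sum[OF fD] by simp
  also have "\<dots> = (\<Sum>j<n. if j = i then 0 else int m)"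
  proof (intro sum.cong refl)
    fix j assume j: "j \<in> {..<n}"
    show "int (card {v\<in>D. u j = v j}) = (if j = i then 0 else int m)"
    proof (cases "j = i")
      case True
      then have e0: "{v\<in>D. u j = v j} = {}" unfolding D_def using ua by auto
      have "card {v\<in>D. u j = v j} = 0" by (simp only: e0 card.empty)
      then show ?thesis using True by simp
    next
      case False
      have "{v\<in>D. u j = v j} = {v\<in>C. v i = a \<and> v j = u j}" unfolding D_def by auto
      moreover have "u j < q" using words_lt[of u q n j] u Cw j by auto
      ultimately have "card {v\<in>D. u j = v j} = m"
        using plotkin(2)[OF Cw Cd i rel q2 dpos mpos fullN, of j "u j"] j False by auto
      then show ?thesis using False by simp
    qed
  qed
  also have "\<dots> = (\<Sum>j\<in>{..<n}-{i}. int m)"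
    using i by (simp add: sum.If_cases Diff_eq Int_commute)
  also have "\<dots> = int m * (int n - 1)" using i by (simp add: of_nat_diff)
  finally have sumeq: "(\<Sum>v\<in>D. int (agr n u v)) = int m * (int n - 1)" .
  have "t dvd (\<Sum>v\<in>D. int (agr n u v))"
  proof (rule dvd_sum)
    fix v assume v: "v \<in> D"
    then have vC: "v \<in> C" and vi: "v i = a" unfolding D_def by auto
    have "u \<noteq> v" using vi ua by auto
    then have "int (agr n u v) \<le> t" using agr_le_t[OF u vC] by simp
    moreover have "\<not> bad u v" using nb vC vi by auto
    ultimately have "int (agr n u v) = 0 \<or> int (agr n u v) = t"
      using \<open>u \<noteq> v\<close> unfolding bad_def by auto
    then show "t dvd int (agr n u v)" by auto
  qed
  then show False using sumeq ndvd unfolding t_def by simp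
qed

definition Fs :: "nat \<Rightarrow> nat set" where "Fs i = {a\<in>{..<q}. f i a = int q * int m}"

definition pick :: "nat \<Rightarrow> (nat\<Rightarrow>nat) \<Rightarrow> nat \<Rightarrow> (nat\<Rightarrow>nat)" where
  "pick i u a = (SOME v. v \<in> C \<and> v i = a \<and> bad u v)"

lemma pick_prop:
  assumes "i < n" "u \<in> C" "a \<in> Fs i" "u i \<noteq> a"
  shows "pick i u a \<in> C \<and> pick i u a i = a \<and> bad u (pick i u a)"
proof -
  have "\<exists>v. v \<in> C \<and> v i = a \<and> bad u v"
    using exists_bad[OF assms(1) _ assms(2,4)] assms(3) unfolding Fs_def by auto
  then show ?thesis unfolding pick_def by (rule someI_ex)
qed

lemma finite_Bad: "finite Bad" unfolding Bad_def using fC by simp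

lemma Bad_lower:
  assumes i: "i < n"
  shows "int (card Bad) \<ge> int (card (Fs i)) * (2 * M - int q * int m - int q * int m * int (card (Fs i)))"
proof -
  define F where "F = Fs i"
  have fF: "finite F" unfolding F_def Fs_def by simp
  define T1 where "T1 = {p\<in>C\<times>F. fst p i \<noteq> snd p}"
  define T2 where "T2 = {p\<in>C\<times>F. fst p i \<notin> F}"
  define B1 where "B1 = {p\<in>Bad. snd p i \<in> F}"
  define B2 where "B2 = {p\<in>Bad. snd p i \<notin> F}"
  have cB: "card Bad = card B1 + card B2"
  proof -
    have "Bad = B1 \<union> B2" "B1 \<inter> B2 = {}" unfolding B1_def B2_def by auto
    moreover have "finite B1" "finite B2" unfolding B1_def B2_def using finite_Bad by auto
    ultimately show ?thesis using card_Un_disjoint by metis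
  qed
  have c1: "card T1 \<le> card B1"
  proof (rule card_inj_on_le)
    show "inj_on (\<lambda>p. (fst p, pick i (fst p) (snd p))) T1"
    proof (rule inj_onI)
      fix p p' assume p: "p \<in> T1" and p': "p' \<in> T1"
        and eq: "(fst p, pick i (fst p) (snd p)) = (fst p', pick i (fst p') (snd p'))"
      have "pick i (fst p) (snd p) i = snd p" using pick_prop[OF i] p unfolding T1_def F_def by auto
      moreover have "pick i (fst p') (snd p') i = snd p'" using pick_prop[OF i] p' unfolding T1_def F_def by auto
      moreover have e1: "fst p = fst p'" and e2: "pick i (fst p) (snd p) = pick i (fst p') (snd p')"
        using eq by auto
      ultimately have "snd p = snd p'" by metis
      then show "p = p'" using e1 by (simp add: prod_eq_iff)
    qed
    show "(\<lambda>p. (fst p, pick i (fst p) (snd p))) ` T1 \<subseteq> B1"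
      using pick_prop[OF i] unfolding T1_def B1_def Bad_def F_def by auto
    show "finite B1" unfolding B1_def using finite_Bad by simp
  qed
  have c2: "card T2 \<le> card B2"
  proof (rule card_inj_on_le)
    show "inj_on (\<lambda>p. (pick i (fst p) (snd p), fst p)) T2"
    proof (rule inj_onI)
      fix p p' assume p: "p \<in> T2" and p': "p' \<in> T2"
        and eq: "(pick i (fst p) (snd p), fst p) = (pick i (fst p') (snd p'), fst p')"
      have "pick i (fst p) (snd p) i = snd p" using pick_prop[OF i] p unfolding T2_def F_def by force
      moreover have "pick i (fst p') (snd p') i = snd p'" using pick_prop[OF i] p' unfolding T2_def F_def by force
      moreover have e1: "fst p = fst p'" and e2: "pick i (fst p) (snd p) = pick i (fst p') (snd p')"
        using eq by auto
      ultimately have "snd p = snd p'" by metis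
      then show "p = p'" using e1 by (simp add: prod_eq_iff)
    qed
    show "(\<lambda>p. (pick i (fst p) (snd p), fst p)) ` T2 \<subseteq> B2"
    proof
      fix x assume "x \<in> (\<lambda>p. (pick i (fst p) (snd p), fst p)) ` T2"
      then obtain v a where va: "v \<in> C" "a \<in> F" "v i \<notin> F" and x: "x = (pick i v a, v)"
        unfolding T2_def by auto
      have "v i \<noteq> a" using va by auto
      then have "pick i v a \<in> C \<and> pick i v a i = a \<and> bad v (pick i v a)"
        using pick_prop[OF i va(1)] va(2) unfolding F_def by auto
      then show "x \<in> B2" using x va bad_sym unfolding B2_def Bad_def by auto
    qed
    show "finite B2" unfolding B2_def using finite_Bad by simp
  qed
  have fullF: "f i a = int q * int m" if "a \<in> F" for a using that unfolding F_def Fs_def by auto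
  have cnt_ne: "(\<Sum>u\<in>C. if u i \<noteq> a then 1 else 0) = M - f i a" for a
  proof -
    have "(\<Sum>u\<in>C. if u i \<noteq> a then 1 else 0::int) = (\<Sum>u\<in>C. 1 - (if u i = a then 1 else 0))"
      by (intro sum.cong refl) auto
    also have "\<dots> = M - f i a"
      unfolding M_def f_def using card_filter_sum[OF fC, of "\<lambda>u. u i = a"] by (simp add: sum_subtractf)
    finally show ?thesis .
  qed
  have cT1: "int (card T1) = int (card F) * (M - int q * int m)"
  proof -
    have "int (card T1) = (\<Sum>p\<in>C\<times>F. if fst p i \<noteq> snd p then 1 else 0)"
      unfolding T1_def by (rule card_filter_sum) (simp add: fC fF)
    also have "\<dots> = (\<Sum>u\<in>C. \<Sum>a\<in>F. if u i \<noteq> a then 1 else 0)"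
      by (simp add: sum.cartesian_product split_def)
    also have "\<dots> = (\<Sum>a\<in>F. \<Sum>u\<in>C. if u i \<noteq> a then 1 else 0)" by (rule sum.swap)
    also have "\<dots> = (\<Sum>a\<in>F. M - int q * int m)"
      using cnt_ne fullF by (intro sum.cong refl) auto
    finally show ?thesis by simp
  qed
  have cinF: "(\<Sum>u\<in>C. if u i \<in> F then 1 else 0) = int (card F) * (int q * int m)"
  proof -
    define C' where "C' = {u\<in>C. u i \<in> F}"
    have fC': "finite C'" unfolding C'_def using fC by simp
    have "(\<Sum>u\<in>C. if u i \<in> F then 1 else 0) = int (card C')"
      unfolding C'_def using card_filter_sum[OF fC, of "\<lambda>u. u i \<in> F"] by simp
    also have "\<dots> = (\<Sum>a\<in>F. int (card {u\<in>C'. u i = a}))"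
      by (rule sum_key[OF fC' fF, symmetric]) (auto simp: C'_def)
    also have "\<dots> = (\<Sum>a\<in>F. f i a)"
      unfolding f_def C'_def by (intro sum.cong refl arg_cong[where f="\<lambda>x. int (card x)"]) auto
    also have "\<dots> = (\<Sum>a\<in>F. int q * int m)" using fullF by simp
    finally show ?thesis by simp
  qed
  have cT2: "int (card T2) = int (card F) * (M - int q * int m * int (card F))"
  proof -
    have "int (card T2) = (\<Sum>p\<in>C\<times>F. if fst p i \<notin> F then 1 else 0)"
      unfolding T2_def by (rule card_filter_sum) (simp add: fC fF)
    also have "\<dots> = (\<Sum>u\<in>C. \<Sum>a\<in>F. if u i \<notin> F then 1 else 0)"
      unfolding sum.cartesian_product by (simp only: split_def)
    also have "\<dots> = (\<Sum>u\<in>C. int (card F) * (1 - (if u i \<in> F then 1 else 0)))"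
      by (intro sum.cong refl) auto
    also have "\<dots> = int (card F) * (M - (\<Sum>u\<in>C. if u i \<in> F then 1 else 0))"
      unfolding M_def by (simp add: sum_distrib_left[symmetric] sum_subtractf)
    finally show ?thesis using cinF by (simp add: algebra_simps)
  qed
  have "int (card Bad) \<ge> int (card T1) + int (card T2)" using cB c1 c2 by simp
  then show ?thesis using cT1 cT2 unfolding F_def by (simp add: algebra_simps)
qed

lemma Fs_props:
  assumes i: "i < n"
  shows "int (card (Fs i)) \<ge> int q - int r" and "int (card (Fs i)) \<le> int q - 1"
    and "E i > int r \<Longrightarrow> int (card (Fs i)) \<ge> int q - int r + 1"
proof -
  define P where "P = {a\<in>{..<q}. e i a > 0}"
  have fP: "finite P" unfolding P_def by simp
  have PF: "P = {..<q} - Fs i"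
  proof (rule set_eqI)
    fix a
    show "a \<in> P \<longleftrightarrow> a \<in> {..<q} - Fs i" using f_le[OF i, of a] unfolding P_def Fs_def e_def by auto
  qed
  have cP: "int (card P) = int q - int (card (Fs i))"
  proof -
    have "Fs i \<subseteq> {..<q}" unfolding Fs_def by auto
    then show ?thesis using PF card_Diff_subset[of "Fs i" "{..<q}"] card_mono[of "{..<q}" "Fs i"]
      by (simp add: of_nat_diff finite_subset)
  qed
  have sP: "(\<Sum>a\<in>P. e i a) = int r"
  proof -
    have "(\<Sum>a<q. e i a) = (\<Sum>a\<in>P. e i a)"
      unfolding P_def using e_nonneg[OF i]
      by (intro sum.mono_neutral_right) (auto simp: less_le)
    then show ?thesis using e_sum[OF i] by simp
  qed
  have ge1: "e i a \<ge> 1" if "a \<in> P" for a using that unfolding P_def by auto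
  have "(\<Sum>a\<in>P. e i a) \<ge> (\<Sum>a\<in>P. 1)" using ge1 by (intro sum_mono) auto
  then have Pr: "int (card P) \<le> int r" using sP by simp
  then show "int (card (Fs i)) \<ge> int q - int r" using cP by simp
  have "P \<noteq> {}"
  proof
    assume "P = {}"
    then show False using sP r1 by simp
  qed
  then have "card P \<ge> 1" using fP by (simp add: Suc_le_eq card_gt_0_iff)
  then show "int (card (Fs i)) \<le> int q - 1" using cP by simp
  assume Eg: "E i > int r"
  have "\<exists>a<q. e i a \<ge> 2"
  proof (rule ccontr)
    assume "\<not> (\<exists>a<q. e i a \<ge> 2)"
    then have "e i a ^ 2 = e i a" if "a < q" for a
    proof -
      have "e i a = 0 \<or> e i a = 1" using e_nonneg[OF i, of a] \<open>\<not> (\<exists>a<q. e i a \<ge> 2)\<close> that by force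
      then show ?thesis by auto
    qed
    then have "E i = (\<Sum>a<q. e i a)" unfolding E_def by simp
    then show False using Eg e_sum[OF i] by simp
  qed
  then obtain a0 where a0: "a0 < q" "e i a0 \<ge> 2" by auto
  then have a0P: "a0 \<in> P" unfolding P_def by auto
  have "(\<Sum>a\<in>P. e i a) = e i a0 + (\<Sum>a\<in>P-{a0}. e i a)" using sum.remove[OF fP a0P] .
  moreover have "(\<Sum>a\<in>P-{a0}. e i a) \<ge> (\<Sum>a\<in>P-{a0}. 1)" using ge1 by (intro sum_mono) auto
  moreover have "int (card (P - {a0})) = int (card P) - 1"
  proof -
    have "card P \<ge> 1" using a0P fP card_gt_0_iff[of P] by auto
    then show ?thesis using a0P fP by (simp add: card_Diff_singleton of_nat_diff)
  qed
  ultimately have "int (card P) + 1 \<le> int r" using sP a0 by simp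
  then show "int (card (Fs i)) \<ge> int q - int r + 1" using cP by simp
qed

lemma sumE_le: "(\<Sum>i<n. E i - int r) \<le> int n * (int r * (int r - 1))"
proof -
  have "(\<Sum>i<n. E i - int r) \<le> (\<Sum>i<n. int r ^ 2 - int r)"
    using E_le by (intro sum_mono) auto
  then show ?thesis by (simp add: power2_eq_square algebra_simps)
qed

lemma contradiction:
  assumes ineq: "int n * (int n - 1 - int d) * (int r - 1) * int r
           < (int q - int r + 1) * (int q * int m * (int q + int r - 2) - 2 * int r)"
  shows False
proof (cases "\<exists>i<n. E i > int r")
  case True
  then obtain i where i: "i < n" "E i > int r" by auto
  define x where "x = int (card (Fs i))"
  define s where "s = int q - x"
  define A where "A = int q * int m"
  have s1: "s \<ge> 1" using Fs_props(2)[OF i(1)] unfolding s_def x_def by simp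
  have s2: "s \<le> int r - 1" using Fs_props(3)[OF i] unfolding s_def x_def by simp
  have Bl: "int (card Bad) \<ge> x * (2 * M - A - A * x)"
    using Bad_lower[OF i(1)] unfolding x_def A_def by simp
  have phi: "x * (2 * M - A - A * x) - (int q - int r + 1) * (A * (int q + int r - 2) - 2 * int r)
      = (int r - 1 - s) * (A * (s + int r - 2) - 2 * int r)"
    unfolding s_def M_def Ccard A_def by (simp add: algebra_simps power2_eq_square)
  have Aq: "A \<ge> int q" unfolding A_def using mpos q2 by simp
  have rq': "int q \<ge> int r + 1" using rq q2 by linarith
  have fac: "(int r - 1 - s) * (A * (s + int r - 2) - 2 * int r) \<ge> 0"
  proof (cases "s = int r - 1")
    case True then show ?thesis by simp
  next
    case False
    then have s3: "s \<le> int r - 2" using s2 by simp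
    then have r3: "int r \<ge> 3" using s1 by simp
    have "A * (s + int r - 2) \<ge> (int r + 1) * (int r - 1)"
      using Aq rq' s1 r3 by (intro mult_mono) auto
    moreover have "(int r + 1) * (int r - 1) = int r * int r - 1" by (simp add: algebra_simps)
    moreover have "int r * int r \<ge> 3 * int r" using r3 by (intro mult_right_mono) auto
    ultimately have "A * (s + int r - 2) - 2 * int r \<ge> 0" using r3 by linarith
    moreover have "int r - 1 - s \<ge> 0" using s2 by simp
    ultimately show ?thesis by simp
  qed
  have t1: "int n - 1 - int d \<ge> 1" using t2 unfolding t_def by simp
  have "int n * (int r * (int r - 1)) * 1 \<le> int n * (int r * (int r - 1)) * (int n - 1 - int d)"
    using t1 r1 by (intro mult_left_mono) auto
  then have "int n * (int r * (int r - 1)) < (int q - int r + 1) * (A * (int q + int r - 2) - 2 * int r)"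
    using ineq unfolding A_def by (simp add: algebra_simps)
  then show False using Bl phi fac Bad_upper sumE_le by linarith
next
  case False
  have pw: "E i - int r \<le> 0" if "i < n" for i
  proof -
    have "\<not> (E i > int r)" using False that by blast
    then show ?thesis by simp
  qed
  have "(\<Sum>i<n. E i - int r) \<le> 0" using pw by (intro sum_nonpos) auto
  then have B0: "int (card Bad) \<le> 0" using Bad_upper by simp
  have i0: "0 < n" using npos .
  define x where "x = int (card (Fs 0))"
  define A where "A = int q * int m"
  have x1: "x \<ge> int q - int r" and x2: "x \<le> int q - 1"
    using Fs_props(1,2)[OF i0] unfolding x_def by auto
  have rq': "int q \<ge> int r + 1" using rq q2 by linarith
  have xp: "x \<ge> 1" using x1 rq' by simp
  have Bl: "int (card Bad) \<ge> x * (2 * M - A - A * x)"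
    using Bad_lower[OF i0] unfolding x_def A_def by simp
  have "A * x \<le> A * (int q - 1)" using x2 unfolding A_def by (intro mult_left_mono) auto
  then have "2 * M - A - A * x \<ge> int q * int q * int m - 2 * int r"
    unfolding M_def Ccard A_def by (simp add: power2_eq_square algebra_simps)
  moreover have "int q * int q * int m \<ge> int q * int q * 1" using mpos by (intro mult_left_mono) auto
  moreover have "int q * int q \<ge> (int r + 1) * (int r + 1)" using rq' by (intro mult_mono) auto
  moreover have "(int r + 1) * (int r + 1) = int r * int r + 2 * int r + 1" by (simp add: algebra_simps)
  moreover have "int r * int r \<ge> 0" by simp
  ultimately have "2 * M - A - A * x \<ge> 1" by linarith
  then have "x * (2 * M - A - A * x) \<ge> 1 * 1" using xp by (intro mult_mono) auto
  then show False using Bl B0 by simp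
qed

end


theorem theorem5p3:
  fixes q n d m r :: nat
  assumes "q \<ge> 2" and "n > 0" and "d > 0" and "m > 0"
    and "int d = int m * (int q * int d - (int q - 1) * (int n - 1))"
    and "\<not> ((int n - int d) dvd (int m * (int n - 1)))"
    and "1 \<le> r" and "r \<le> q - 1"
    and "int n * (int n - 1 - int d) * (int r - 1) * int r
           < (int q - int r + 1) * (int q * int m * (int q + int r - 2) - 2 * int r)"
  shows "int (A_q q n d) < int q ^ 2 * int m - int r"
proof -
  let ?S = "{card C | C. C \<subseteq> words q n \<and> min_dist_ge n C d}"
  have fin: "finite ?S"
  proof (rule finite_subset)
    show "?S \<subseteq> {..card (words q n)}"
      using card_mono[OF finite_words] by auto
  qed simp
  have ne: "?S \<noteq> {}"
  proof -
    have "{} \<subseteq> words q n \<and> min_dist_ge n {} d" unfolding min_dist_ge_def by simp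
    then have "card {} \<in> ?S" by (intro CollectI exI[of _ "{}"]) simp
    then show ?thesis by blast
  qed
  have "A_q q n d \<in> ?S" unfolding A_q_def using Max_in[OF fin ne] .
  then obtain C0 where C0: "C0 \<subseteq> words q n" "min_dist_ge n C0 d" "card C0 = A_q q n d" by auto
  show ?thesis
  proof (rule ccontr)
    assume "\<not> ?thesis"
    then have ge: "int (A_q q n d) \<ge> int q ^ 2 * int m - int r" by simp
    define Mn where "Mn = q^2 * m - r"
    have "r \<le> q^2 * m"
    proof -
      have "q \<le> q^2 * m" using assms(1,4) by (simp add: power2_eq_square)
      then show ?thesis using assms(8) by linarith
    qed
    then have iMn: "int Mn = int q ^ 2 * int m - int r" unfolding Mn_def by (simp add: of_nat_diff)
    then have "Mn \<le> card C0" using ge C0(3) by linarith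
    then obtain C where C: "C \<subseteq> C0" "card C = Mn"
      using obtain_subset_with_card_n by metis
    have Cw: "C \<subseteq> words q n" using C C0 by auto
    have Cd: "min_dist_ge n C d" using C(1) C0(2) unfolding min_dist_ge_def by blast
    interpret codeloc q n d m r C
      using assms Cw Cd C(2) iMn by unfold_locales auto
    show False by (rule contradiction[OF assms(9)])
  qed
qed

end
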